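(* Let $G$ be a threshold graph with binary string $b=0^{s_1}1^{t_1}\cdots0^{s_k}1^{t_k}$ (all $s_i,t_i\geq1$), and for each $i\in\{1,\ldots,k\}$ let $\sigma_i=\sum_{j=1}^i s_j$ and $\tau_i=\sum_{j=i}^k t_j$. Then \[ \max_{1\leq i\leq k}\left\{\frac{(\tau_i-1)+\sqrt{(\tau_i-1)^2+4\tau_i\sigma_i}}{2}\right\}\leq\lambda_{\max}(G) \] and \[ \lambda_{\min}(G)\leq\min_{1\leq i\leq k}\left\{\frac{(\tau_i-1)-\sqrt{(\tau_i-1)^2+4\tau_i\sigma_i}}{2}\right\}. \]
   Context: $\lambda_{\max}(G)$ and $\lambda_{\min}(G)$ denote the largest and smallest eigenvalues of the $(0,1)$-adjacency matrix of $G$. Threshold graphs from binary strings: given $b=b_1\cdots b_n\in\{0,1\}^n$ with $b_1=0$, start with a single vertex and for $j=2,\ldots,n$ add a new vertex adjacent to all previous vertices if $b_j=1$ and isolated if $b_j=0$; the result is $G(b)$, and $b$ is its binary string. $0^s$ (resp. $1^t$) denotes $s$ consecutive zeros (resp. $t$ consecutive ones). *)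

theory Defs
  imports Complex_Main "Jordan_Normal_Form.Char_Poly"
begin

text \<open>Threshold graph G(b) from a binary string b (False = 0, True = 1), vertices 0..n-1
  in order of addition: vertex j is adjacent to every earlier vertex i < j iff b_j = 1.
  Hence distinct vertices i, j are adjacent iff b at position max i j is 1.\<close>
definition threshold_adj :: "bool list \<Rightarrow> real mat" where
  "threshold_adj b = mat (length b) (length b)
     (\<lambda>(i, j). if i \<noteq> j \<and> b ! (max i j) then 1 else 0)"

definition block_string :: "nat list \<Rightarrow> nat list \<Rightarrow> bool list" where
  "block_string ss ts = concat (map (\<lambda>(s, t). replicate s False @ replicate t True) (zip ss ts))"

definition lambda_max :: "real mat \<Rightarrow> real" where
  "lambda_max A = Max {x. eigenvalue A x}"

definition lambda_min :: "real mat \<Rightarrow> real" where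
  "lambda_min A = Min {x. eigenvalue A x}"

end

theory Submission
  imports Defs "HOL-Analysis.Function_Topology"
begin


lemma compact_sphere_fun:
  "compact {x::nat\<Rightarrow>real. (\<forall>i. n \<le> i \<longrightarrow> x i = 0) \<and> (\<Sum>i<n. (x i)^2) = 1}"
proof -
  define K :: "(nat \<Rightarrow> real) set" where "K = Pi\<^sub>E UNIV (\<lambda>i::nat. if i < n then {-1..1::real} else {0::real})"
  have "compactin (product_topology (\<lambda>_. euclidean) UNIV) K"
    unfolding K_def compactin_PiE by (auto simp: compact_Icc)
  hence cK: "compact K" by (simp add: euclidean_product_topology)
  have c1: "closed {x::nat\<Rightarrow>real. \<forall>i. n \<le> i \<longrightarrow> x i = 0}"
  proof -
    have "{x::nat\<Rightarrow>real. \<forall>i. n \<le> i \<longrightarrow> x i = 0} = (\<Inter>i\<in>{n..}. {x. x i = 0})" by auto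
    also have "closed \<dots>"
      by (intro closed_INT ballI closed_Collect_eq continuous_on_product_coordinates continuous_on_const)
    finally show ?thesis .
  qed
  have c2: "closed {x::nat\<Rightarrow>real. (\<Sum>i<n. (x i)^2) = 1}"
    by (intro closed_Collect_eq continuous_intros continuous_on_product_coordinates)
  have sub: "{x::nat\<Rightarrow>real. (\<forall>i. n \<le> i \<longrightarrow> x i = 0) \<and> (\<Sum>i<n. (x i)^2) = 1} \<subseteq> K"
  proof
    fix x :: "nat \<Rightarrow> real" assume x: "x \<in> {x::nat\<Rightarrow>real. (\<forall>i. n \<le> i \<longrightarrow> x i = 0) \<and> (\<Sum>i<n. (x i)^2) = 1}"
    have "\<bar>x i\<bar> \<le> 1" if "i < n" for i
    proof -
      have "(x i)^2 \<le> (\<Sum>i<n. (x i)^2)"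
        by (rule member_le_sum) (use that in auto)
      hence "(x i)^2 \<le> 1^2" using x by simp
      thus ?thesis using abs_le_square_iff[of "x i" 1] by simp
    qed
    thus "x \<in> K" using x unfolding K_def by (auto simp: PiE_def extensional_def abs_le_iff)
  qed
  have "{x::nat\<Rightarrow>real. (\<forall>i. n \<le> i \<longrightarrow> x i = 0) \<and> (\<Sum>i<n. (x i)^2) = 1}
     = K \<inter> ({x::nat\<Rightarrow>real. \<forall>i. n \<le> i \<longrightarrow> x i = 0} \<inter> {x::nat\<Rightarrow>real. (\<Sum>i<n. (x i)^2) = 1})"
    using sub by auto
  also have "compact \<dots>" using cK c1 c2 by (intro compact_Int_closed closed_Int)
  finally show ?thesis .
qed


lemma cont_coord_on [continuous_intros]: "continuous_on S (\<lambda>x::nat\<Rightarrow>real. x i)"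
  by (rule continuous_on_subset[OF continuous_on_product_coordinates]) auto

lemma quad_nonpos_lin_zero:
  fixes a b :: real
  assumes "\<And>t. a * t + b * t^2 \<le> 0"
  shows "a = 0"
proof (rule ccontr)
  assume a: "a \<noteq> 0"
  define c where "c = \<bar>b\<bar> + 1"
  define t where "t = a / c"
  have d: "c > 0" unfolding c_def by simp
  have "(a * t + b * t^2) * c^2 = a^2 * (c + b)"
    unfolding t_def using d by (simp add: field_simps power2_eq_square)
  moreover have "a^2 * (c + b) > 0"
    using a d unfolding c_def by (intro mult_pos_pos) auto
  ultimately have "(a * t + b * t^2) * c^2 > 0" by simp
  hence "a * t + b * t^2 > 0" using d by (simp add: zero_less_mult_iff)
  thus False using assms[of t] by simp
qed

lemma delta_sum1: "k < (n::nat) \<Longrightarrow> (\<Sum>i<n. (if i = k then 1 else 0) * f i) = (f k :: real)"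
proof -
  assume k: "k < n"
  have "(\<Sum>i<n. (if i = k then 1 else 0) * f i) = (\<Sum>i<n. if i = k then f i else 0)"
    by (intro sum.cong) auto
  also have "\<dots> = f k" using k by (subst sum.delta) auto
  finally show ?thesis .
qed

lemma delta_sum2: "k < (n::nat) \<Longrightarrow> (\<Sum>i<n. f i * (if i = k then 1 else 0)) = (f k :: real)"
  using delta_sum1[of k n f] by (simp add: mult.commute)

lemma rayleigh_max:
  fixes A :: "real mat"
  assumes A: "A \<in> carrier_mat n n" and sym: "\<And>i j. i < n \<Longrightarrow> j < n \<Longrightarrow> A $$ (i,j) = A $$ (j,i)"
    and n: "0 < n"
  shows "\<exists>M. eigenvalue A M \<and> (\<forall>x. (\<Sum>i<n. \<Sum>j<n. A $$ (i,j) * x i * x j) \<le> M * (\<Sum>i<n. (x i)^2))"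
proof -
  define Q where "Q = (\<lambda>x::nat\<Rightarrow>real. \<Sum>i<n. \<Sum>j<n. A $$ (i,j) * x i * x j)"
  define N where "N = (\<lambda>x::nat\<Rightarrow>real. \<Sum>i<n. (x i)^2)"
  define S where "S = {x::nat\<Rightarrow>real. (\<forall>i. n \<le> i \<longrightarrow> x i = 0) \<and> (\<Sum>i<n. (x i)^2) = 1}"
  have cS: "compact S" unfolding S_def by (rule compact_sphere_fun)
  have ne: "(\<lambda>i. if i = 0 then 1 else 0) \<in> S"
  proof -
    have "(\<Sum>i<n. (if i = 0 then 1 else 0::real)^2) = (\<Sum>i<n. if i = 0 then 1 else 0)"
      by (intro sum.cong) auto
    thus ?thesis using n unfolding S_def by simp
  qed
  have cQ: "continuous_on S Q" unfolding Q_def by (intro continuous_intros)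
  obtain v where vS: "v \<in> S" and vmax: "\<forall>y\<in>S. Q y \<le> Q v"
    using continuous_attains_sup[OF cS _ cQ] ne by blast
  define M where "M = Q v"
  have Nv: "N v = 1" using vS unfolding S_def N_def by auto
  have vout: "\<And>i. n \<le> i \<Longrightarrow> v i = 0" using vS unfolding S_def by auto
  have hom: "Q (\<lambda>i. c * x i) = c^2 * Q x" for c x
    unfolding Q_def by (simp add: sum_distrib_left power2_eq_square algebra_simps)
  have Nhom: "N (\<lambda>i. c * x i) = c^2 * N x" for c x
    unfolding N_def by (simp add: sum_distrib_left power2_eq_square algebra_simps)
  have bound: "Q x \<le> M * N x" for x
  proof -
    define x' where "x' = (\<lambda>i. if i < n then x i else 0)"
    have eqQ: "Q x' = Q x" and eqN: "N x' = N x" unfolding Q_def N_def x'_def by (auto intro!: sum.cong)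
    show ?thesis
    proof (cases "N x = 0")
      case True
      then have "\<forall>i\<in>{..<n}. (x i)^2 = 0" unfolding N_def
        by (subst sum_nonneg_eq_0_iff[symmetric]) auto
      hence "Q x = 0" unfolding Q_def by auto
      thus ?thesis using True by simp
    next
      case False
      have "N x \<ge> 0" unfolding N_def by (intro sum_nonneg) auto
      hence Npos: "N x > 0" using False by simp
      define r where "r = sqrt (N x)"
      have r: "r > 0" "r^2 = N x" unfolding r_def using Npos by auto
      define y where "y = (\<lambda>i. (1/r) * x' i)"
      have "N y = 1" unfolding y_def Nhom eqN using r False by (simp add: power_divide)
      moreover have "\<forall>i. n \<le> i \<longrightarrow> y i = 0" unfolding y_def x'_def by auto
      ultimately have "y \<in> S" unfolding S_def N_def by auto
      hence "Q y \<le> M" using vmax unfolding M_def by auto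
      moreover have "Q y = Q x / N x" unfolding y_def hom eqQ using r by (simp add: power_divide)
      ultimately have "Q x / N x \<le> M" by simp
      thus ?thesis using Npos by (simp add: divide_le_eq mult.commute)
    qed
  qed
  define u where "u = vec n v"
  have Au: "A *\<^sub>v u = M \<cdot>\<^sub>v u"
  proof (rule eq_vecI)
    show "dim_vec (A *\<^sub>v u) = dim_vec (M \<cdot>\<^sub>v u)" using A unfolding u_def by simp
    fix k assume "k < dim_vec (M \<cdot>\<^sub>v u)"
    hence k: "k < n" unfolding u_def by simp
    define w where "w = (\<Sum>j<n. A $$ (k,j) * v j)"
    have Av: "(A *\<^sub>v u) $ k = w" using A k
      by (simp add: u_def w_def scalar_prod_def row_def lessThan_atLeast0)
    define d where "d = (\<lambda>i::nat. if i = k then (1::real) else 0)"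
    have key: "(2 * (w - M * v k)) * t + (A $$ (k,k) - M) * t^2 \<le> 0" for t
    proof -
      define z where "z = (\<lambda>i. v i + t * d i)"
      have X1: "(\<Sum>i<n. \<Sum>j<n. A $$ (i,j) * d i * v j) = w"
      proof -
        have "(\<Sum>i<n. \<Sum>j<n. A $$ (i,j) * d i * v j) = (\<Sum>i<n. d i * (\<Sum>j<n. A $$ (i,j) * v j))"
          by (simp add: sum_distrib_left algebra_simps)
        also have "\<dots> = w" unfolding d_def w_def using k by (rule delta_sum1)
        finally show ?thesis .
      qed
      have X2: "(\<Sum>i<n. \<Sum>j<n. A $$ (i,j) * v i * d j) = w"
      proof -
        have "(\<Sum>i<n. \<Sum>j<n. A $$ (i,j) * v i * d j) = (\<Sum>i<n. v i * (\<Sum>j<n. A $$ (i,j) * d j))"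
          by (simp add: sum_distrib_left algebra_simps)
        also have "\<dots> = (\<Sum>i<n. A $$ (i,k) * v i)"
          unfolding d_def using k by (intro sum.cong refl) (simp add: delta_sum2)
        also have "\<dots> = w" unfolding w_def using k sym by (intro sum.cong) auto
        finally show ?thesis .
      qed
      have X3: "(\<Sum>i<n. \<Sum>j<n. A $$ (i,j) * d i * d j) = A $$ (k,k)"
      proof -
        have "(\<Sum>i<n. \<Sum>j<n. A $$ (i,j) * d i * d j) = (\<Sum>i<n. d i * (\<Sum>j<n. A $$ (i,j) * d j))"
          by (simp add: sum_distrib_left algebra_simps)
        also have "\<dots> = (\<Sum>i<n. d i * A $$ (i,k))"
          unfolding d_def using k by (intro sum.cong refl) (simp add: delta_sum2)
        also have "\<dots> = A $$ (k,k)" unfolding d_def using k by (rule delta_sum1)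
        finally show ?thesis .
      qed
      have "Q z = (\<Sum>i<n. \<Sum>j<n. A $$ (i,j) * v i * v j + t * (A $$ (i,j) * d i * v j)
                 + t * (A $$ (i,j) * v i * d j) + t^2 * (A $$ (i,j) * d i * d j))"
        unfolding Q_def z_def by (intro sum.cong refl) (simp add: algebra_simps power2_eq_square)
      also have "\<dots> = Q v + t * (\<Sum>i<n. \<Sum>j<n. A $$ (i,j) * d i * v j)
          + t * (\<Sum>i<n. \<Sum>j<n. A $$ (i,j) * v i * d j) + t^2 * (\<Sum>i<n. \<Sum>j<n. A $$ (i,j) * d i * d j)"
        unfolding Q_def by (simp add: sum.distrib sum_distrib_left)
      also have "\<dots> = Q v + t * w + t * w + t^2 * A $$ (k,k)"
        unfolding X1 X2 X3 by simp
      finally have Qz: "Q z = M + 2 * t * w + t^2 * A $$ (k,k)" unfolding M_def by simp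
      have Y1: "(\<Sum>i<n. v i * d i) = v k" unfolding d_def using k by (rule delta_sum2)
      have Y2: "(\<Sum>i<n. d i * d i) = 1" unfolding d_def using k delta_sum1[of k n "\<lambda>i. if i = k then 1 else 0"] by simp
      have "N z = (\<Sum>i<n. (v i)^2 + 2 * t * (v i * d i) + t^2 * (d i * d i))"
        unfolding N_def z_def by (intro sum.cong refl) (simp add: algebra_simps power2_eq_square)
      also have "\<dots> = N v + 2 * t * (\<Sum>i<n. v i * d i) + t^2 * (\<Sum>i<n. d i * d i)"
        unfolding N_def by (simp add: sum.distrib sum_distrib_left)
      also have "\<dots> = N v + 2 * t * v k + t^2" unfolding Y1 Y2 by simp
      finally have Nz: "N z = 1 + 2 * t * v k + t^2" using Nv by simp
      from bound[of z] Qz Nz show ?thesis by (simp add: algebra_simps)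
    qed
    have "2 * (w - M * v k) = 0" by (rule quad_nonpos_lin_zero[OF key])
    thus "(A *\<^sub>v u) $ k = (M \<cdot>\<^sub>v u) $ k" using Av k unfolding u_def by simp
  qed
  have "u \<noteq> 0\<^sub>v n"
  proof
    assume "u = 0\<^sub>v n"
    hence "\<And>i. i < n \<Longrightarrow> v i = 0" unfolding u_def by (metis index_vec index_zero_vec(1))
    hence "N v = 0" unfolding N_def by simp
    thus False using Nv by simp
  qed
  hence "eigenvector A u M" unfolding eigenvector_def using A Au unfolding u_def by auto
  hence "eigenvalue A M" unfolding eigenvalue_def by blast
  moreover have "\<forall>x. Q x \<le> M * N x" using bound by blast
  ultimately show ?thesis unfolding Q_def N_def by blast
qed


lemma rayleigh_min:
  fixes A :: "real mat"
  assumes A: "A \<in> carrier_mat n n" and sym: "\<And>i j. i < n \<Longrightarrow> j < n \<Longrightarrow> A $$ (i,j) = A $$ (j,i)"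
    and n: "0 < n"
  shows "\<exists>m. eigenvalue A m \<and> (\<forall>x. m * (\<Sum>i<n. (x i)^2) \<le> (\<Sum>i<n. \<Sum>j<n. A $$ (i,j) * x i * x j))"
proof -
  define B where "B = mat n n (\<lambda>(i,j). - A $$ (i,j))"
  have B: "B \<in> carrier_mat n n" unfolding B_def by simp
  have Bij: "\<And>i j. i < n \<Longrightarrow> j < n \<Longrightarrow> B $$ (i,j) = - A $$ (i,j)" unfolding B_def by simp
  have symB: "\<And>i j. i < n \<Longrightarrow> j < n \<Longrightarrow> B $$ (i,j) = B $$ (j,i)" using sym Bij by simp
  obtain M where ev: "eigenvalue B M" and bd: "\<forall>x. (\<Sum>i<n. \<Sum>j<n. B $$ (i,j) * x i * x j) \<le> M * (\<Sum>i<n. (x i)^2)"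
    using rayleigh_max[OF B symB n] by blast
  from ev obtain u where u: "eigenvector B u M" unfolding eigenvalue_def by blast
  hence uc: "u \<in> carrier_vec n" and u0: "u \<noteq> 0\<^sub>v n" and Bu: "B *\<^sub>v u = M \<cdot>\<^sub>v u"
    unfolding eigenvector_def using B by auto
  have "A *\<^sub>v u = (- M) \<cdot>\<^sub>v u"
  proof (rule eq_vecI)
    show "dim_vec (A *\<^sub>v u) = dim_vec ((- M) \<cdot>\<^sub>v u)" using A uc by simp
    fix k assume "k < dim_vec ((- M) \<cdot>\<^sub>v u)"
    hence k: "k < n" using uc by simp
    have "(B *\<^sub>v u) $ k = - ((A *\<^sub>v u) $ k)"
      using A B k uc Bij by (simp add: scalar_prod_def row_def sum_negf[symmetric])
    moreover have "(B *\<^sub>v u) $ k = M * u $ k" using Bu k uc by (metis index_smult_vec(1) carrier_vecD)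
    ultimately show "(A *\<^sub>v u) $ k = ((- M) \<cdot>\<^sub>v u) $ k" using k uc by simp
  qed
  hence "eigenvalue A (- M)" unfolding eigenvalue_def eigenvector_def using A uc u0 by auto
  moreover have "(- M) * (\<Sum>i<n. (x i)^2) \<le> (\<Sum>i<n. \<Sum>j<n. A $$ (i,j) * x i * x j)" for x
  proof -
    have "(\<Sum>i<n. \<Sum>j<n. B $$ (i,j) * x i * x j) = - (\<Sum>i<n. \<Sum>j<n. A $$ (i,j) * x i * x j)"
      using Bij by (simp add: sum_negf[symmetric])
    thus ?thesis using bd[rule_format, of x] by simp
  qed
  ultimately show ?thesis by blast
qed

lemma threshold_adj_carrier: "threshold_adj b \<in> carrier_mat (length b) (length b)"
  unfolding threshold_adj_def by simp

lemma threshold_adj_index: "i < length b \<Longrightarrow> j < length b \<Longrightarrow>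
  threshold_adj b $$ (i,j) = (if i \<noteq> j \<and> b ! (max i j) then 1 else 0)"
  unfolding threshold_adj_def by simp

lemma quad_test:
  fixes b :: "bool list" and S T :: "nat set" and a c :: real
  assumes S: "S \<subseteq> {..<length b}" and T: "T \<subseteq> {..<length b}"
    and ST: "\<forall>p\<in>S. \<forall>q\<in>T. p < q" and bS: "\<forall>p\<in>S. \<not> b ! p" and bT: "\<forall>q\<in>T. b ! q"
  defines "x \<equiv> (\<lambda>p. if p \<in> S then a else if p \<in> T then c else 0)"
  shows "(\<Sum>i<length b. \<Sum>j<length b. threshold_adj b $$ (i,j) * x i * x j)
           = 2 * real (card S) * real (card T) * a * c + real (card T) * (real (card T) - 1) * c^2"
    and "(\<Sum>i<length b. (x i)^2) = real (card S) * a^2 + real (card T) * c^2"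
proof -
  let ?n = "length b"
  let ?A = "threshold_adj b"
  have fS: "finite S" and fT: "finite T" using S T finite_subset by auto
  have disj: "S \<inter> T = {}" using ST by auto
  define f where "f = (\<lambda>i j. ?A $$ (i,j) * x i * x j)"
  have x0: "x p = 0" if "p \<notin> S \<union> T" for p using that unfolding x_def by auto
  have U: "S \<union> T \<subseteq> {..<?n}" using S T by auto
  have "(\<Sum>i<?n. \<Sum>j<?n. f i j) = (\<Sum>i\<in>S \<union> T. \<Sum>j<?n. f i j)"
    by (rule sum.mono_neutral_right) (use U x0 in \<open>auto simp: f_def\<close>)
  also have "\<dots> = (\<Sum>i\<in>S \<union> T. \<Sum>j\<in>S \<union> T. f i j)"
    by (intro sum.cong refl sum.mono_neutral_right) (use U x0 in \<open>auto simp: f_def\<close>)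
  also have "\<dots> = (\<Sum>i\<in>S. \<Sum>j\<in>S. f i j) + (\<Sum>i\<in>S. \<Sum>j\<in>T. f i j)
       + ((\<Sum>i\<in>T. \<Sum>j\<in>S. f i j) + (\<Sum>i\<in>T. \<Sum>j\<in>T. f i j))"
    using fS fT disj by (simp add: sum.union_disjoint sum.distrib)
  also have "(\<Sum>i\<in>S. \<Sum>j\<in>S. f i j) = 0"
  proof (intro sum.neutral ballI)
    fix i j assume i: "i \<in> S" and j: "j \<in> S"
    have "max i j \<in> S" using i j by (simp add: max_def)
    hence "\<not> b ! max i j" using bS by auto
    thus "f i j = 0" unfolding f_def using i j S by (simp add: threshold_adj_index subset_iff)
  qed
  also have "(\<Sum>i\<in>S. \<Sum>j\<in>T. f i j) = (\<Sum>i\<in>S. \<Sum>j\<in>T. a * c)"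
  proof (intro sum.cong refl)
    fix i j assume i: "i \<in> S" and j: "j \<in> T"
    have "i < j" using ST i j by auto
    hence "max i j = j" "i \<noteq> j" by auto
    thus "f i j = a * c" unfolding f_def x_def using i j S T bT disj
      by (auto simp: threshold_adj_index subset_iff)
  qed
  also have "(\<Sum>i\<in>T. \<Sum>j\<in>S. f i j) = (\<Sum>i\<in>T. \<Sum>j\<in>S. a * c)"
  proof (intro sum.cong refl)
    fix i j assume i: "i \<in> T" and j: "j \<in> S"
    have "j < i" using ST i j by auto
    hence "max i j = i" "i \<noteq> j" by auto
    thus "f i j = a * c" unfolding f_def x_def using i j S T bT disj
      by (auto simp: threshold_adj_index subset_iff)
  qed
  also have "(\<Sum>i\<in>T. \<Sum>j\<in>T. f i j) = (\<Sum>i\<in>T. \<Sum>j\<in>T. c^2 - (if j = i then c^2 else 0))"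
  proof (intro sum.cong refl)
    fix i j assume i: "i \<in> T" and j: "j \<in> T"
    have "max i j \<in> T" using i j by (simp add: max_def)
    thus "f i j = c^2 - (if j = i then c^2 else 0)" unfolding f_def x_def using i j S T bT disj
      by (auto simp: threshold_adj_index subset_iff power2_eq_square)
  qed
  also have "\<dots> = (\<Sum>i\<in>T. real (card T) * c^2 - c^2)"
  proof (intro sum.cong refl)
    fix i assume i: "i \<in> T"
    show "(\<Sum>j\<in>T. c^2 - (if j = i then c^2 else 0)) = real (card T) * c^2 - c^2"
      using i fT by (simp add: sum_subtractf)
  qed
  finally show "(\<Sum>i<length b. \<Sum>j<length b. threshold_adj b $$ (i,j) * x i * x j)
           = 2 * real (card S) * real (card T) * a * c + real (card T) * (real (card T) - 1) * c^2"
    unfolding f_def by (simp add: algebra_simps)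
  have "(\<Sum>i<?n. (x i)^2) = (\<Sum>i\<in>S \<union> T. (x i)^2)"
    by (rule sum.mono_neutral_right) (use U x0 in auto)
  also have "\<dots> = (\<Sum>i\<in>S. (x i)^2) + (\<Sum>i\<in>T. (x i)^2)"
    using fS fT disj by (simp add: sum.union_disjoint)
  also have "\<dots> = (\<Sum>i\<in>S. a^2) + (\<Sum>i\<in>T. c^2)"
    unfolding x_def using disj by (intro arg_cong2[where f="(+)"] sum.cong) auto
  finally show "(\<Sum>i<length b. (x i)^2) = real (card S) * a^2 + real (card T) * c^2" by simp
qed


lemma test_eq:
  fixes b :: "bool list" and S T :: "nat set" and r :: real
  assumes S: "S \<subseteq> {..<length b}" and T: "T \<subseteq> {..<length b}"
    and ST: "\<forall>p\<in>S. \<forall>q\<in>T. p < q" and bS: "\<forall>p\<in>S. \<not> b ! p" and bT: "\<forall>q\<in>T. b ! q"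
    and cS: "card S \<ge> 1" and cT: "card T \<ge> 1"
    and r: "r^2 = (real (card T) - 1)^2 + 4 * real (card T) * real (card S)"
  shows "\<exists>x. (\<Sum>i<length b. \<Sum>j<length b. threshold_adj b $$ (i,j) * x i * x j)
             = ((real (card T) - 1) + r) / 2 * (\<Sum>i<length b. (x i)^2)
          \<and> (\<Sum>i<length b. (x i)^2) > 0"
proof -
  define \<tau> where "\<tau> = real (card T)"
  define \<sigma> where "\<sigma> = real (card S)"
  define \<theta> where "\<theta> = ((\<tau> - 1) + r) / 2"
  have eq: "\<theta>^2 - (\<tau> - 1) * \<theta> - \<tau> * \<sigma> = 0"
  proof -
    have "\<theta>^2 - (\<tau> - 1) * \<theta> - \<tau> * \<sigma> = (r^2 - ((\<tau> - 1)^2 + 4 * \<tau> * \<sigma>)) / 4"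
      unfolding \<theta>_def by (simp add: field_simps power2_eq_square)
    thus ?thesis using r unfolding \<tau>_def \<sigma>_def by simp
  qed
  define x where "x = (\<lambda>p. if p \<in> S then \<tau> else if p \<in> T then \<theta> else 0)"
  have q1: "(\<Sum>i<length b. \<Sum>j<length b. threshold_adj b $$ (i,j) * x i * x j)
      = 2 * \<sigma> * \<tau> * \<tau> * \<theta> + \<tau> * (\<tau> - 1) * \<theta>^2"
    using quad_test(1)[OF S T ST bS bT, of \<tau> \<theta>] unfolding x_def \<tau>_def \<sigma>_def by simp
  have q2: "(\<Sum>i<length b. (x i)^2) = \<sigma> * \<tau>^2 + \<tau> * \<theta>^2"
    using quad_test(2)[OF S T ST bS bT, of \<tau> \<theta>] unfolding x_def \<tau>_def \<sigma>_def by simp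
  have "2 * \<sigma> * \<tau> * \<tau> * \<theta> + \<tau> * (\<tau> - 1) * \<theta>^2 - \<theta> * (\<sigma> * \<tau>^2 + \<tau> * \<theta>^2)
        = - \<tau> * \<theta> * (\<theta>^2 - (\<tau> - 1) * \<theta> - \<tau> * \<sigma>)"
    by (simp add: algebra_simps power2_eq_square)
  hence Q: "2 * \<sigma> * \<tau> * \<tau> * \<theta> + \<tau> * (\<tau> - 1) * \<theta>^2 = \<theta> * (\<sigma> * \<tau>^2 + \<tau> * \<theta>^2)"
    using eq by simp
  have "\<sigma> * \<tau>^2 > 0" using cS cT unfolding \<sigma>_def \<tau>_def by simp
  moreover have "\<tau> * \<theta>^2 \<ge> 0" unfolding \<tau>_def by simp
  ultimately have N: "\<sigma> * \<tau>^2 + \<tau> * \<theta>^2 > 0" by linarith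
  have th: "((real (card T) - 1) + r) / 2 = \<theta>" unfolding \<theta>_def \<tau>_def ..
  show ?thesis unfolding th
  proof (intro exI conjI)
    show "(\<Sum>i<length b. \<Sum>j<length b. threshold_adj b $$ (i,j) * x i * x j) = \<theta> * (\<Sum>i<length b. (x i)^2)"
      unfolding q1 q2 using Q by simp
    show "(\<Sum>i<length b. (x i)^2) > 0" unfolding q2 using N by simp
  qed
qed


lemma bs_Cons: "block_string (s#ss) (t#ts) = replicate s False @ replicate t True @ block_string ss ts"
  by (simp add: block_string_def)

lemma bs_append: "length ss = length ts \<Longrightarrow>
  block_string (ss @ ss') (ts @ ts') = block_string ss ts @ block_string ss' ts'"
  by (simp add: block_string_def zip_append)

lemma bs_counts: "length ss = length ts \<Longrightarrow>
   length (filter Not (block_string ss ts)) = sum_list ss \<and>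
   length (filter (\<lambda>x. x) (block_string ss ts)) = sum_list ts \<and>
   length (block_string ss ts) = sum_list ss + sum_list ts"
  by (induction ss ts rule: list_induct2) (auto simp: block_string_def)

lemma sigma_conv: "i \<le> length xs \<Longrightarrow> (\<Sum>j=1..i. xs ! (j - 1)) = sum_list (take i xs)"
proof (induction i)
  case 0 then show ?case by simp
next
  case (Suc i)
  hence "(\<Sum>j=1..Suc i. xs ! (j - 1)) = sum_list (take i xs) + xs ! i" by simp
  also have "\<dots> = sum_list (take (Suc i) xs)" using Suc.prems by (simp add: take_Suc_conv_app_nth)
  finally show ?case .
qed

lemma tau_conv: "m \<le> length xs \<Longrightarrow> (\<Sum>j=Suc m..length xs. xs ! (j - 1)) = sum_list (drop m (xs::nat list))"
proof (induction xs arbitrary: m rule: rev_induct)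
  case Nil then show ?case by simp
next
  case (snoc a xs)
  show ?case
  proof (cases "m = Suc (length xs)")
    case True then show ?thesis by simp
  next
    case False
    hence m: "m \<le> length xs" using snoc.prems by simp
    have "(\<Sum>j=Suc m..length (xs @ [a]). (xs @ [a]) ! (j - 1))
        = (\<Sum>j=Suc m..length xs. (xs @ [a]) ! (j - 1)) + a"
      using m by (simp add: nth_append)
    also have "(\<Sum>j=Suc m..length xs. (xs @ [a]) ! (j - 1)) = (\<Sum>j=Suc m..length xs. xs ! (j - 1))"
      by (intro sum.cong refl) (auto simp: nth_append)
    also have "\<dots> = sum_list (drop m xs)" using snoc.IH[OF m] .
    finally show ?thesis using m by simp
  qed
qed

lemma block_ST:
  assumes len: "length ss = k" "length ts = k" and i: "1 \<le> i" "i \<le> k"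
  defines "b \<equiv> block_string ss ts"
  shows "\<exists>S T. S \<subseteq> {..<length b} \<and> T \<subseteq> {..<length b} \<and> (\<forall>p\<in>S. \<forall>q\<in>T. p < q)
     \<and> (\<forall>p\<in>S. \<not> b ! p) \<and> (\<forall>q\<in>T. b ! q)
     \<and> card S = sum_list (take i ss) \<and> card T = sum_list (drop (i - 1) ts)"
proof -
  define m where "m = i - 1"
  have mk: "m < k" and im: "i = Suc m" using i unfolding m_def by auto
  define pre where "pre = block_string (take m ss) (take m ts)"
  define post where "post = block_string (drop (Suc m) ss) (drop (Suc m) ts)"
  define s where "s = ss ! m"
  define t where "t = ts ! m"
  have bdec: "b = pre @ replicate s False @ replicate t True @ post"
  proof -
    have "ss = take m ss @ s # drop (Suc m) ss" unfolding s_def using mk len by (simp add: id_take_nth_drop)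
    moreover have "ts = take m ts @ t # drop (Suc m) ts" unfolding t_def using mk len by (simp add: id_take_nth_drop)
    ultimately have "b = block_string (take m ss @ s # drop (Suc m) ss) (take m ts @ t # drop (Suc m) ts)"
      unfolding b_def by simp
    also have "\<dots> = pre @ replicate s False @ replicate t True @ post"
      unfolding pre_def post_def using len by (simp add: bs_append bs_Cons)
    finally show ?thesis .
  qed
  have cpre: "length (filter Not pre) = sum_list (take m ss)" "length pre = sum_list (take m ss) + sum_list (take m ts)"
    unfolding pre_def using bs_counts[of "take m ss" "take m ts"] len by auto
  have cpost: "length (filter (\<lambda>x. x) post) = sum_list (drop (Suc m) ts)"
    unfolding post_def using bs_counts[of "drop (Suc m) ss" "drop (Suc m) ts"] len by auto
  define L where "L = length pre + s"
  define S where "S = {p. p < L \<and> \<not> b ! p}"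
  define T where "T = {p. L \<le> p \<and> p < length b \<and> b ! p}"
  have Llen: "L \<le> length b" unfolding L_def bdec by simp
  have tk: "take L b = pre @ replicate s False" unfolding L_def bdec by simp
  have dr: "drop L b = replicate t True @ post" unfolding L_def bdec by simp
  have "card S = length (filter Not (take L b))"
  proof -
    have "S = {p. p < length (take L b) \<and> \<not> take L b ! p}" unfolding S_def using Llen by auto
    thus ?thesis by (simp add: length_filter_conv_card)
  qed
  also have "\<dots> = sum_list (take m ss) + s" unfolding tk using cpre by simp
  also have "\<dots> = sum_list (take i ss)" unfolding im s_def using mk len by (simp add: take_Suc_conv_app_nth)
  finally have cS: "card S = sum_list (take i ss)" .
  have "card T = length (filter (\<lambda>x. x) (drop L b))"
  proof -
    have "T = (\<lambda>q. q + L) ` {q. q < length (drop L b) \<and> drop L b ! q}"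
    proof (rule equalityI; rule subsetI)
      fix p assume "p \<in> T"
      hence "p - L < length (drop L b) \<and> drop L b ! (p - L)" and "p = (p - L) + L" unfolding T_def using Llen by auto
      thus "p \<in> (\<lambda>q. q + L) ` {q. q < length (drop L b) \<and> drop L b ! q}" by blast
    next
      fix p assume "p \<in> (\<lambda>q. q + L) ` {q. q < length (drop L b) \<and> drop L b ! q}"
      thus "p \<in> T" unfolding T_def using Llen by (auto simp: add.commute)
    qed
    hence "card T = card {q. q < length (drop L b) \<and> drop L b ! q}"
      by (simp add: card_image inj_on_def)
    thus ?thesis by (simp add: length_filter_conv_card)
  qed
  also have "\<dots> = t + sum_list (drop (Suc m) ts)" unfolding dr using cpost by simp
  also have "\<dots> = sum_list (drop (i - 1) ts)" unfolding m_def[symmetric] t_def using mk len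
    by (simp add: Cons_nth_drop_Suc[symmetric])
  finally have cT: "card T = sum_list (drop (i - 1) ts)" .
  show ?thesis
    by (rule exI[of _ S], rule exI[of _ T]) (use cS cT Llen in \<open>auto simp: S_def T_def\<close>)
qed


theorem theorem5p2:
  fixes ss ts :: "nat list" and k :: nat
  assumes "length ss = k" and "length ts = k" and "k \<ge> 1"
    and "\<forall>s\<in>set ss. s \<ge> 1" and "\<forall>t\<in>set ts. t \<ge> 1"
  defines "\<sigma> \<equiv> (\<lambda>i. real (\<Sum>j=1..i. ss ! (j - 1)))"
    and "\<tau> \<equiv> (\<lambda>i. real (\<Sum>j=i..k. ts ! (j - 1)))"
  shows "(Max ((\<lambda>i. ((\<tau> i - 1) + sqrt ((\<tau> i - 1)^2 + 4 * \<tau> i * \<sigma> i)) / 2) ` {1..k})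
           \<le> lambda_max (threshold_adj (block_string ss ts))) \<and>
         (lambda_min (threshold_adj (block_string ss ts))
           \<le> Min ((\<lambda>i. ((\<tau> i - 1) - sqrt ((\<tau> i - 1)^2 + 4 * \<tau> i * \<sigma> i)) / 2) ` {1..k}))"
proof -
  note len = assms(1,2)
  define b where "b = block_string ss ts"
  define A where "A = threshold_adj b"
  define n where "n = length b"
  have Ac: "A \<in> carrier_mat n n" unfolding A_def n_def by (rule threshold_adj_carrier)
  have sym: "\<And>i j. i < n \<Longrightarrow> j < n \<Longrightarrow> A $$ (i,j) = A $$ (j,i)"
    unfolding A_def n_def by (simp add: threshold_adj_index max.commute)
  have nsum: "n = sum_list ss + sum_list ts" unfolding n_def b_def using bs_counts[of ss ts] len by simp
  have "ss ! 0 \<in> set ss" using len assms(3) by simp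
  hence "ss ! 0 \<ge> 1" "ss ! 0 \<le> sum_list ss" using assms(4) by (auto intro: member_le_sum_list)
  hence npos: "0 < n" unfolding nsum by simp
  obtain M where evM: "eigenvalue A M"
    and bM: "\<forall>x. (\<Sum>i<n. \<Sum>j<n. A $$ (i,j) * x i * x j) \<le> M * (\<Sum>i<n. (x i)^2)"
    using rayleigh_max[OF Ac sym npos] by blast
  obtain m where evm: "eigenvalue A m"
    and bm: "\<forall>x. m * (\<Sum>i<n. (x i)^2) \<le> (\<Sum>i<n. \<Sum>j<n. A $$ (i,j) * x i * x j)"
    using rayleigh_min[OF Ac sym npos] by blast
  define E where "E = {x. eigenvalue A x}"
  have finE: "finite E"
  proof -
    have "E = {x. poly (char_poly A) x = 0}" unfolding E_def using eigenvalue_root_char_poly[OF Ac] by auto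
    moreover have "char_poly A \<noteq> 0" using degree_monic_char_poly[OF Ac] by auto
    ultimately show ?thesis using poly_roots_finite by simp
  qed
  have ME: "M \<in> E" "m \<in> E" unfolding E_def using evM evm by auto
  have per: "((\<tau> i - 1) + sqrt ((\<tau> i - 1)^2 + 4 * \<tau> i * \<sigma> i)) / 2 \<le> M
           \<and> m \<le> ((\<tau> i - 1) - sqrt ((\<tau> i - 1)^2 + 4 * \<tau> i * \<sigma> i)) / 2" if i: "i \<in> {1..k}" for i
  proof -
    from i have i1: "1 \<le> i" and ik: "i \<le> k" by auto
    obtain S T where S: "S \<subseteq> {..<length b}" and T: "T \<subseteq> {..<length b}"
      and ST: "\<forall>p\<in>S. \<forall>q\<in>T. p < q" and bS: "\<forall>p\<in>S. \<not> b ! p" and bT: "\<forall>q\<in>T. b ! q"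
      and cS: "card S = sum_list (take i ss)" and cT: "card T = sum_list (drop (i - 1) ts)"
      using block_ST[OF len i1 ik] unfolding b_def by blast
    have sig: "\<sigma> i = real (card S)" unfolding \<sigma>_def cS using sigma_conv[of i ss] ik len by simp
    have tau: "\<tau> i = real (card T)"
    proof -
      have "(\<Sum>j=i..k. ts ! (j - 1)) = (\<Sum>j=Suc (i - 1)..length ts. ts ! (j - 1))" using i1 len by simp
      also have "\<dots> = sum_list (drop (i - 1) ts)" using tau_conv[of "i - 1" ts] ik len by simp
      finally show ?thesis unfolding \<tau>_def cT by simp
    qed
    have "ss ! (i - 1) \<in> set (take i ss)" using i1 ik len by (auto simp: in_set_conv_nth intro!: exI[of _ "i - 1"])
    moreover have "ss ! (i - 1) \<ge> 1" using assms(4) i1 ik len by simp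
    ultimately have cS1: "card S \<ge> 1" unfolding cS using member_le_sum_list[of "ss ! (i - 1)" "take i ss"] by simp
    have "ts ! (i - 1) \<in> set (drop (i - 1) ts)" using i1 ik len by (auto simp: in_set_conv_nth intro!: exI[of _ 0])
    moreover have "ts ! (i - 1) \<ge> 1" using assms(5) i1 ik len by simp
    ultimately have cT1: "card T \<ge> 1" unfolding cT using member_le_sum_list[of "ts ! (i - 1)" "drop (i - 1) ts"] by simp
    define D where "D = (real (card T) - 1)^2 + 4 * real (card T) * real (card S)"
    have D0: "D \<ge> 0" unfolding D_def by simp
    have up: "((real (card T) - 1) + sqrt D) / 2 \<le> M"
    proof -
      obtain x where qx: "(\<Sum>i<length b. \<Sum>j<length b. threshold_adj b $$ (i,j) * x i * x j)
             = ((real (card T) - 1) + sqrt D) / 2 * (\<Sum>i<length b. (x i)^2)"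
          and nx: "(\<Sum>i<length b. (x i)^2) > 0"
        using test_eq[OF S T ST bS bT cS1 cT1, of "sqrt D"] D0 unfolding D_def by auto
      have "((real (card T) - 1) + sqrt D) / 2 * (\<Sum>i<length b. (x i)^2) \<le> M * (\<Sum>i<length b. (x i)^2)"
        using bM[rule_format, of x] qx unfolding A_def n_def by simp
      thus ?thesis using nx by simp
    qed
    have lo: "m \<le> ((real (card T) - 1) - sqrt D) / 2"
    proof -
      obtain x where qx: "(\<Sum>i<length b. \<Sum>j<length b. threshold_adj b $$ (i,j) * x i * x j)
             = ((real (card T) - 1) + - sqrt D) / 2 * (\<Sum>i<length b. (x i)^2)"
          and nx: "(\<Sum>i<length b. (x i)^2) > 0"
        using test_eq[OF S T ST bS bT cS1 cT1, of "- sqrt D"] D0 unfolding D_def by auto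
      have "m * (\<Sum>i<length b. (x i)^2) \<le> ((real (card T) - 1) + - sqrt D) / 2 * (\<Sum>i<length b. (x i)^2)"
        using bm[rule_format, of x] qx unfolding A_def n_def by simp
      thus ?thesis using nx by simp
    qed
    show ?thesis using up lo unfolding sig tau D_def by simp
  qed
  have MleMax: "M \<le> lambda_max A" unfolding lambda_max_def using finE ME unfolding E_def by simp
  have minlem: "lambda_min A \<le> m" unfolding lambda_min_def using finE ME unfolding E_def by simp
  show ?thesis
  proof
    show "Max ((\<lambda>i. ((\<tau> i - 1) + sqrt ((\<tau> i - 1)^2 + 4 * \<tau> i * \<sigma> i)) / 2) ` {1..k})
           \<le> lambda_max (threshold_adj (block_string ss ts))"
      unfolding A_def[symmetric] b_def[symmetric]
      using per MleMax assms(3) by (intro Max.boundedI) force+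
    show "lambda_min (threshold_adj (block_string ss ts))
           \<le> Min ((\<lambda>i. ((\<tau> i - 1) - sqrt ((\<tau> i - 1)^2 + 4 * \<tau> i * \<sigma> i)) / 2) ` {1..k})"
      unfolding A_def[symmetric] b_def[symmetric]
      using per minlem assms(3) by (intro Min.boundedI) force+
  qed
qed

end
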